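(* For every integer $n\ge 1$, the functional $$F_n=\sum_{i=1}^{n}\sum_{j=1}^{n+1-i}e_{i,j}^*\in\mathfrak{gl}(n)^*$$ is regular on $\mathfrak{gl}(n)$; that is, $\dim\ker(B_{F_n})=n=\operatorname{ind}\mathfrak{gl}(n)$.
   Context: All Lie algebras are over $\mathbb{C}$. For $1\le i,j\le n$, $e_{i,j}$ is the matrix unit and $e_{i,j}^*$ the dual functional, $e_{i,j}^*(X)=X_{i,j}$. For a Lie algebra $\mathfrak{g}$ and $f\in\mathfrak{g}^*$, the Kirillov form is $B_f(x,y)=f([x,y])$ and $\ker(B_f)=\{x\in\mathfrak{g}: B_f(x,y)=0\ \forall y\in\mathfrak{g}\}$. The index is $\operatorname{ind}\mathfrak{g}=\min_{f\in\mathfrak{g}^*}\dim\ker(B_f)$; a functional $f$ is regular if $\dim\ker(B_f)=\operatorname{ind}\mathfrak{g}$. It is known that $\operatorname{ind}\mathfrak{gl}(n)=n$. *)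

theory Defs
  imports Complex_Main "HOL-Library.Function_Algebras"
begin

text \<open>Matrices in gl(n) are encoded as functions nat => nat => complex that vanish
  outside the index square {0..<n} x {0..<n}; index i (0-based) corresponds to i+1 in
  the paper.\<close>

type_synonym cmat = "nat \<Rightarrow> nat \<Rightarrow> complex"

definition gl :: "nat \<Rightarrow> cmat set" where
  "gl n = {X. \<forall>i j. (n \<le> i \<or> n \<le> j) \<longrightarrow> X i j = 0}"

definition mscale :: "complex \<Rightarrow> cmat \<Rightarrow> cmat" where
  "mscale c X = (\<lambda>i j. c * X i j)"

definition mmult :: "nat \<Rightarrow> cmat \<Rightarrow> cmat \<Rightarrow> cmat" where
  "mmult n X Y = (\<lambda>i j. \<Sum>k<n. X i k * Y k j)"

definition lie_bracket :: "nat \<Rightarrow> cmat \<Rightarrow> cmat \<Rightarrow> cmat" where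
  "lie_bracket n X Y = mmult n X Y - mmult n Y X"

definition kirillov :: "nat \<Rightarrow> (cmat \<Rightarrow> complex) \<Rightarrow> cmat \<Rightarrow> cmat \<Rightarrow> complex" where
  "kirillov n f x y = f (lie_bracket n x y)"

definition kirillov_ker :: "nat \<Rightarrow> (cmat \<Rightarrow> complex) \<Rightarrow> cmat set" where
  "kirillov_ker n f = {x \<in> gl n. \<forall>y \<in> gl n. kirillov n f x y = 0}"

definition cdim :: "cmat set \<Rightarrow> nat" where
  "cdim S = vector_space.dim mscale S"

text \<open>e_{i,j}^*(X) = X_{i,j}; F_n = sum over 1<=i<=n, 1<=j<=n+1-i of e_{i,j}^*,
  i.e. (0-based) over i < n, j < n - i.\<close>
definition F :: "nat \<Rightarrow> cmat \<Rightarrow> complex" where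
  "F n X = (\<Sum>i<n. \<Sum>j<n - i. X i j)"

end

theory Submission
  imports Defs
begin

definition pos :: "nat \<Rightarrow> nat \<Rightarrow> nat" where
  "pos n i = (if 2*i < n then 2*i else 2*(n-1-i)+1)"

lemma pos_lt: "i < n \<Longrightarrow> pos n i < n" unfolding pos_def by (auto split: if_splits; arith)
lemma pos_inj: "i < n \<Longrightarrow> j < n \<Longrightarrow> pos n i = pos n j \<Longrightarrow> i = j" unfolding pos_def by (auto split: if_splits; arith)
lemma pos_0: "i < n \<Longrightarrow> pos n i = 0 \<longleftrightarrow> i = 0" unfolding pos_def by simp
lemma pos_surj: "m < n \<Longrightarrow> \<exists>i<n. pos n i = m"
proof (cases "even m")
  case True
  assume "m < n" then show ?thesis using True by (intro exI[of _ "m div 2"]) (auto simp: pos_def)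
next
  case False
  assume "m < n" then show ?thesis using False by (intro exI[of _ "n - 1 - m div 2"]) (auto simp: pos_def elim!: oddE; arith)
qed
lemma N1: "i < n \<Longrightarrow> pos n i > Suc m \<Longrightarrow> pos n (n-1-i) > m \<and> (n - i < n \<longrightarrow> pos n (n-i) > m)"
  unfolding pos_def by (auto split: if_splits; arith)
lemma N2: "i < n \<Longrightarrow> pos n i = Suc m \<Longrightarrow> (pos n (n-1-i) = m \<and> (n - i < n \<longrightarrow> pos n (n-i) > m))
   \<or> (n - i < n \<and> pos n (n-i) = m \<and> pos n (n-1-i) > m)"
  unfolding pos_def by (auto split: if_splits; arith)
lemma N3: "j < n \<Longrightarrow> pos n j = t \<Longrightarrow> Suc t < n \<Longrightarrow> (pos n (n-1-j) = Suc t \<and> (n - j < n \<longrightarrow> pos n (n-j) \<le> t))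
   \<or> (n - j < n \<and> pos n (n-j) = Suc t \<and> pos n (n-1-j) \<le> t)"
  unfolding pos_def by (auto split: if_splits; arith)


definition Km :: "nat \<Rightarrow> cmat" where
  "Km n = (\<lambda>i j. if i < n \<and> j < n then (if i + j = n - 1 then 1 else 0) - (if i + j = n then 1 else 0) else 0)"
definition Jm :: "nat \<Rightarrow> cmat" where
  "Jm n = (\<lambda>i j. if i < n \<and> j < n \<and> i + j < n then 1 else 0)"
definition Idm :: "nat \<Rightarrow> cmat" where
  "Idm n = (\<lambda>i j. if i < n \<and> i = j then 1 else 0)"

lemma glD: "X \<in> gl n \<Longrightarrow> n \<le> i \<or> n \<le> j \<Longrightarrow> X i j = 0"
  by (auto simp: gl_def)

lemma Km_gl: "Km n \<in> gl n" and Jm_gl: "Jm n \<in> gl n" and Im_gl: "Idm n \<in> gl n"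
  by (auto simp: gl_def Km_def Jm_def Idm_def)

lemma mmult_gl: "A \<in> gl n \<Longrightarrow> B \<in> gl n \<Longrightarrow> mmult n A B \<in> gl n"
  by (auto simp: gl_def mmult_def)

lemma mmult_assoc: "mmult n (mmult n A B) C = mmult n A (mmult n B C)"
proof -
  have "(\<Sum>k<n. (\<Sum>l<n. A i l * B l k) * C k j) = (\<Sum>l<n. A i l * (\<Sum>k<n. B l k * C k j))" for i j
    by (simp add: sum_distrib_left sum_distrib_right mult.assoc) (rule sum.swap)
  then show ?thesis by (simp add: mmult_def)
qed

lemma Im_left: "X \<in> gl n \<Longrightarrow> mmult n (Idm n) X = X"
proof (rule ext, rule ext)
  fix i j assume X: "X \<in> gl n"
  have "mmult n (Idm n) X i j = (\<Sum>k<n. if k = i then (if i < n then X i j else 0) else 0)"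
    unfolding mmult_def by (rule sum.cong) (auto simp: Idm_def)
  then show "mmult n (Idm n) X i j = X i j" using X by (auto simp: glD)
qed

lemma Im_right: "X \<in> gl n \<Longrightarrow> mmult n X (Idm n) = X"
proof (rule ext, rule ext)
  fix i j assume X: "X \<in> gl n"
  have "mmult n X (Idm n) i j = (\<Sum>k<n. if k = j then (if j < n then X i j else 0) else 0)"
    unfolding mmult_def by (rule sum.cong) (auto simp: Idm_def)
  then show "mmult n X (Idm n) i j = X i j" using X by (auto simp: glD)
qed

lemma Km_left: "Y \<in> gl n \<Longrightarrow> mmult n (Km n) Y i j = (if i < n then Y (n - 1 - i) j - Y (n - i) j else 0)"
proof (cases "i < n")
  case True
  assume Y: "Y \<in> gl n"
  have "mmult n (Km n) Y i j = (\<Sum>k<n. (if k = n - 1 - i then Y k j else 0) - (if k = n - i then Y k j else 0))"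
    unfolding mmult_def Km_def by (rule sum.cong) (use True in auto)
  also have "\<dots> = (\<Sum>k<n. (if k = n - 1 - i then Y k j else 0)) - (\<Sum>k<n. (if k = n - i then Y k j else 0))"
    by (rule sum_subtractf)
  also have "\<dots> = Y (n - 1 - i) j - Y (n - i) j"
    using True Y by (auto simp: glD)
  finally show ?thesis using True by simp
qed (simp add: mmult_def Km_def)

lemma Km_right: "Y \<in> gl n \<Longrightarrow> mmult n Y (Km n) i j = (if j < n then Y i (n - 1 - j) - Y i (n - j) else 0)"
proof (cases "j < n")
  case True
  assume Y: "Y \<in> gl n"
  have "mmult n Y (Km n) i j = (\<Sum>k<n. (if k = n - 1 - j then Y i k else 0) - (if k = n - j then Y i k else 0))"
    unfolding mmult_def Km_def by (rule sum.cong) (use True in auto)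
  also have "\<dots> = (\<Sum>k<n. (if k = n - 1 - j then Y i k else 0)) - (\<Sum>k<n. (if k = n - j then Y i k else 0))"
    by (rule sum_subtractf)
  also have "\<dots> = Y i (n - 1 - j) - Y i (n - j)"
    using True Y by (auto simp: glD)
  finally show ?thesis using True by simp
qed (simp add: mmult_def Km_def)

lemma JK: "mmult n (Jm n) (Km n) = Idm n"
proof (rule ext, rule ext)
  fix i j
  show "mmult n (Jm n) (Km n) i j = Idm n i j"
    using Km_right[OF Jm_gl, of n i j] by (auto simp: Jm_def Idm_def)
qed

lemma KJ: "mmult n (Km n) (Jm n) = Idm n"
proof (rule ext, rule ext)
  fix i j
  show "mmult n (Km n) (Jm n) i j = Idm n i j"
    using Km_left[OF Jm_gl, of n i j] by (auto simp: Jm_def Idm_def)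
qed

lemma comm_transfer:
  assumes "mmult n A B = Idm n" "mmult n B A = Idm n" "X \<in> gl n" "mmult n A X = mmult n X A" "B \<in> gl n"
  shows "mmult n B X = mmult n X B"
proof -
  have "mmult n B X = mmult n B (mmult n (mmult n X A) B)"
    using assms by (simp add: mmult_assoc Im_right)
  also have "\<dots> = mmult n B (mmult n (mmult n A X) B)"
    using assms(4) by simp
  also have "\<dots> = mmult n (mmult n B A) (mmult n X B)"
    by (simp add: mmult_assoc)
  also have "\<dots> = mmult n X B" using assms by (simp add: Im_left mmult_gl)
  finally show ?thesis .
qed


lemma F_Jm: "F n X = (\<Sum>i<n. \<Sum>j<n. Jm n i j * X i j)"
proof -
  have H: "(\<Sum>j<n - i. X i j) = (\<Sum>j<n. Jm n i j * X i j)" if "i < n" for i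
  proof -
    have "{..<n - i} = {j \<in> {..<n}. i + j < n}" by auto
    have "(\<Sum>j\<in>{..<n}. if i + j < n then X i j else 0) = sum (X i) {j \<in> {..<n}. i + j < n}"
      by (rule sum.inter_filter[symmetric]) simp
    with \<open>{..<n - i} = _\<close> have "(\<Sum>j<n - i. X i j) = (\<Sum>j\<in>{..<n}. if i + j < n then X i j else 0)"
      by simp
    also have "\<dots> = (\<Sum>j<n. Jm n i j * X i j)"
      by (rule sum.cong) (use that in \<open>auto simp: Jm_def\<close>)
    finally show ?thesis .
  qed
  show ?thesis unfolding F_def by (rule sum.cong[OF refl]) (rule H, simp)
qed

lemma Jm_sym: "Jm n i j = Jm n j i" by (auto simp: Jm_def)

lemma bracket_formula:
  "F n (lie_bracket n x y) = (\<Sum>a<n. \<Sum>b<n. y a b * (mmult n (Jm n) x b a - mmult n x (Jm n) b a))"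
proof -
  have 1: "(\<Sum>i<n. \<Sum>j<n. Jm n i j * mmult n x y i j) = (\<Sum>a<n. \<Sum>b<n. y a b * mmult n (Jm n) x b a)"
  proof -
    have "(\<Sum>i<n. \<Sum>j<n. Jm n i j * mmult n x y i j) = (\<Sum>i<n. \<Sum>j<n. \<Sum>k<n. Jm n i j * x i k * y k j)"
      by (simp add: mmult_def sum_distrib_left mult.assoc)
    also have "\<dots> = (\<Sum>i<n. \<Sum>k<n. \<Sum>j<n. Jm n i j * x i k * y k j)"
      by (rule sum.cong[OF refl]) (rule sum.swap)
    also have "\<dots> = (\<Sum>k<n. \<Sum>i<n. \<Sum>j<n. Jm n i j * x i k * y k j)"
      by (rule sum.swap)
    also have "\<dots> = (\<Sum>k<n. \<Sum>j<n. \<Sum>i<n. Jm n i j * x i k * y k j)"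
      by (rule sum.cong[OF refl]) (rule sum.swap)
    also have "\<dots> = (\<Sum>a<n. \<Sum>b<n. y a b * mmult n (Jm n) x b a)"
      by (simp add: mmult_def sum_distrib_left Jm_sym[of n _ _] mult_ac)
    finally show ?thesis .
  qed
  have 2: "(\<Sum>i<n. \<Sum>j<n. Jm n i j * mmult n y x i j) = (\<Sum>a<n. \<Sum>b<n. y a b * mmult n x (Jm n) b a)"
  proof -
    have "(\<Sum>i<n. \<Sum>j<n. Jm n i j * mmult n y x i j) = (\<Sum>i<n. \<Sum>j<n. \<Sum>k<n. Jm n i j * y i k * x k j)"
      by (simp add: mmult_def sum_distrib_left mult.assoc)
    also have "\<dots> = (\<Sum>i<n. \<Sum>k<n. \<Sum>j<n. Jm n i j * y i k * x k j)"
      by (rule sum.cong[OF refl]) (rule sum.swap)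
    also have "\<dots> = (\<Sum>a<n. \<Sum>b<n. y a b * mmult n x (Jm n) b a)"
      by (simp add: mmult_def sum_distrib_left Jm_sym[of n _ _] mult_ac)
    finally show ?thesis .
  qed
  have "F n (lie_bracket n x y) = (\<Sum>i<n. \<Sum>j<n. Jm n i j * mmult n x y i j) - (\<Sum>i<n. \<Sum>j<n. Jm n i j * mmult n y x i j)"
    by (simp add: F_Jm lie_bracket_def right_diff_distrib sum_subtractf)
  also have "\<dots> = (\<Sum>a<n. \<Sum>b<n. y a b * (mmult n (Jm n) x b a - mmult n x (Jm n) b a))"
    unfolding 1 2 by (simp add: right_diff_distrib sum_subtractf)
  finally show ?thesis .
qed

definition Em :: "nat \<Rightarrow> nat \<Rightarrow> cmat" where "Em p q = (\<lambda>a b. if a = p \<and> b = q then 1 else 0)"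

lemma double_delta: "p < n \<and> q < n \<Longrightarrow> (\<Sum>a<n. \<Sum>b<n. Em p q a b * D b a) = D q p"
proof -
  assume pq: "p < n \<and> q < n"
  have "(\<Sum>a<n. \<Sum>b<n. Em p q a b * D b a) = (\<Sum>a<n. \<Sum>b<n. if a = p then (if b = q then D b a else 0) else 0)"
    by (intro sum.cong refl) (simp add: Em_def)
  also have "\<dots> = (\<Sum>a<n. if a = p then (\<Sum>b<n. if b = q then D b a else 0) else 0)"
    by (intro sum.cong refl) simp
  also have "\<dots> = D q p" using pq by simp
  finally show ?thesis .
qed

lemma ker_char: "kirillov_ker n (F n) = {x \<in> gl n. mmult n (Km n) x = mmult n x (Km n)}"
proof -
  have "(\<forall>y\<in>gl n. kirillov n (F n) x y = 0) \<longleftrightarrow> mmult n (Jm n) x = mmult n x (Jm n)" if x: "x \<in> gl n" for x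
  proof
    assume H: "\<forall>y\<in>gl n. kirillov n (F n) x y = 0"
    show "mmult n (Jm n) x = mmult n x (Jm n)"
    proof (rule ext, rule ext)
      fix q p
      show "mmult n (Jm n) x q p = mmult n x (Jm n) q p"
      proof (cases "p < n \<and> q < n")
        case True
        have "Em p q \<in> gl n" using True by (auto simp: gl_def Em_def)
        with H have "F n (lie_bracket n x (Em p q)) = 0" by (auto simp: kirillov_def)
        moreover have "F n (lie_bracket n x (Em p q)) = mmult n (Jm n) x q p - mmult n x (Jm n) q p"
          unfolding bracket_formula using True by (rule double_delta)
        ultimately show ?thesis by simp
      next
        case False
        then show ?thesis using mmult_gl[OF Jm_gl x] mmult_gl[OF x Jm_gl] by (auto simp: glD)
      qed
    qed
  next
    assume "mmult n (Jm n) x = mmult n x (Jm n)"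
    then show "\<forall>y\<in>gl n. kirillov n (F n) x y = 0"
      by (simp add: kirillov_def bracket_formula)
  qed
  moreover have "mmult n (Jm n) x = mmult n x (Jm n) \<longleftrightarrow> mmult n (Km n) x = mmult n x (Km n)" if x: "x \<in> gl n" for x
    using comm_transfer[OF JK KJ x _ Km_gl] comm_transfer[OF KJ JK x _ Jm_gl] by blast
  ultimately show ?thesis unfolding kirillov_ker_def by auto
qed



interpretation V: vector_space mscale
  by unfold_locales (auto simp: mscale_def fun_eq_iff algebra_simps)

definition Sc :: "nat \<Rightarrow> cmat set" where
  "Sc n = {x \<in> gl n. mmult n (Km n) x = mmult n x (Km n)}"

definition Pw :: "nat \<Rightarrow> nat \<Rightarrow> cmat" where
  "Pw n m = ((mmult n (Km n)) ^^ m) (Idm n)"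

lemma Pw_0: "Pw n 0 = Idm n" by (simp add: Pw_def)
lemma Pw_Suc: "Pw n (Suc m) = mmult n (Km n) (Pw n m)" by (simp add: Pw_def)

lemma Pw_gl: "Pw n m \<in> gl n"
  by (induction m) (auto simp: Pw_0 Pw_Suc Im_gl mmult_gl Km_gl)

lemma Pw_comm: "mmult n (Km n) (Pw n m) = mmult n (Pw n m) (Km n)"
proof (induction m)
  case 0 then show ?case by (simp add: Pw_0 Im_left Im_right Km_gl)
next
  case (Suc m)
  have "mmult n (Km n) (Pw n (Suc m)) = mmult n (Km n) (mmult n (Pw n m) (Km n))"
    by (simp add: Pw_Suc Suc)
  also have "\<dots> = mmult n (Pw n (Suc m)) (Km n)" by (simp add: Pw_Suc mmult_assoc)
  finally show ?case .
qed

lemma Pw_Sc: "Pw n m \<in> Sc n" by (simp add: Sc_def Pw_gl Pw_comm)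

lemma mmult_add_right: "mmult n A (x + y) = mmult n A x + mmult n A y"
  by (simp add: mmult_def fun_eq_iff sum.distrib distrib_left)
lemma mmult_add_left: "mmult n (x + y) A = mmult n x A + mmult n y A"
  by (simp add: mmult_def fun_eq_iff sum.distrib distrib_right)
lemma mmult_scale_right: "mmult n A (mscale c x) = mscale c (mmult n A x)"
  by (simp add: mmult_def fun_eq_iff mscale_def sum_distrib_left mult_ac)
lemma mmult_scale_left: "mmult n (mscale c x) A = mscale c (mmult n x A)"
  by (simp add: mmult_def fun_eq_iff mscale_def sum_distrib_left mult_ac)
lemma mmult_zero_right: "mmult n A 0 = 0"
  by (simp add: mmult_def fun_eq_iff)
lemma mmult_zero_left: "mmult n 0 A = 0"
  by (simp add: mmult_def fun_eq_iff)

lemma gl_add: "x \<in> gl n \<Longrightarrow> y \<in> gl n \<Longrightarrow> x + y \<in> gl n" by (auto simp: gl_def)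
lemma gl_scale: "x \<in> gl n \<Longrightarrow> mscale c x \<in> gl n" by (auto simp: gl_def mscale_def)
lemma gl_zero: "0 \<in> gl n" by (auto simp: gl_def)

lemma Sc_subspace: "V.subspace (Sc n)"
  unfolding V.subspace_def Sc_def
  by (auto simp: gl_add gl_scale gl_zero mmult_add_right mmult_add_left mmult_scale_right mmult_scale_left
      mmult_zero_right mmult_zero_left)

lemma Pw_col: "Pw n (Suc m) i 0 = (if i < n then Pw n m (n - 1 - i) 0 - Pw n m (n - i) 0 else 0)"
  by (simp add: Pw_Suc Km_left[OF Pw_gl])

lemma tri: "i < n \<Longrightarrow> (pos n i > m \<longrightarrow> Pw n m i 0 = 0) \<and> (pos n i = m \<longrightarrow> Pw n m i 0 \<noteq> 0)"
proof (induction m arbitrary: i)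
  case 0
  then show ?case using pos_0[OF 0] by (auto simp: Pw_0 Idm_def)
next
  case (Suc m)
  note i = Suc.prems
  have zn: "Pw n m (n - i) 0 = 0" if "\<not> n - i < n" using that Pw_gl[of n m] by (auto simp: glD)
  have a: "n - 1 - i < n" using i by simp
  show ?case
  proof (intro conjI impI)
    assume "Suc m < pos n i"
    from N1[OF i this] Suc.IH[OF a] Suc.IH[of "n - i"] zn
    show "Pw n (Suc m) i 0 = 0" by (auto simp: Pw_col i)
  next
    assume "pos n i = Suc m"
    from N2[OF i this] show "Pw n (Suc m) i 0 \<noteq> 0"
    proof
      assume h: "pos n (n - 1 - i) = m \<and> (n - i < n \<longrightarrow> m < pos n (n - i))"
      have "Pw n m (n - 1 - i) 0 \<noteq> 0" using h Suc.IH[OF a] by simp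
      moreover have "Pw n m (n - i) 0 = 0" using h Suc.IH[of "n - i"] zn by blast
      ultimately show ?thesis by (simp add: Pw_col i)
    next
      assume h: "n - i < n \<and> pos n (n - i) = m \<and> m < pos n (n - 1 - i)"
      have "Pw n m (n - 1 - i) 0 = 0" using h Suc.IH[OF a] by simp
      moreover have "Pw n m (n - i) 0 \<noteq> 0" using h Suc.IH[of "n - i"] by blast
      ultimately show ?thesis by (simp add: Pw_col i)
    qed
  qed
qed

lemma inj_Sc:
  assumes x: "x \<in> Sc n" and c0: "\<And>i. x i 0 = 0"
  shows "x = 0"
proof -
  have xg: "x \<in> gl n" and xc: "mmult n (Km n) x = mmult n x (Km n)" using x by (auto simp: Sc_def)
  have "\<forall>j<n. pos n j \<le> t \<longrightarrow> (\<forall>i. x i j = 0)" for t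
  proof (induction t)
    case 0
    then show ?case using pos_0 c0 by auto
  next
    case (Suc t)
    show ?case
    proof (intro allI impI)
      fix j' i assume j': "j' < n" "pos n j' \<le> Suc t"
      show "x i j' = 0"
      proof (cases "pos n j' \<le> t")
        case True then show ?thesis using Suc.IH j' by auto
      next
        case False
        then have pj': "pos n j' = Suc t" using j' by auto
        then have st: "Suc t < n" using pos_lt[OF j'(1)] by simp
        obtain j where j: "j < n" "pos n j = t" using pos_surj[of t n] st by auto
        have "mmult n (Km n) x i j = 0"
          using Suc.IH j by (simp add: Km_left[OF xg])
        then have eq: "x i (n - 1 - j) = x i (n - j)"
          using xc Km_right[OF xg, of i j] j by (simp add: fun_eq_iff)
        have zn: "x i (n - j) = 0" if "\<not> n - j < n" using that xg by (auto simp: glD)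
        have a: "n - 1 - j < n" using j by simp
        from N3[OF j st] show ?thesis
        proof
          assume h: "pos n (n - 1 - j) = Suc t \<and> (n - j < n \<longrightarrow> pos n (n - j) \<le> t)"
          then have "n - 1 - j = j'" using pos_inj[OF a j'(1)] pj' by simp
          moreover have "x i (n - j) = 0" using h zn Suc.IH by auto
          ultimately show ?thesis using eq by simp
        next
          assume h: "n - j < n \<and> pos n (n - j) = Suc t \<and> pos n (n - 1 - j) \<le> t"
          then have "n - j = j'" using pos_inj[of "n - j" n j'] j'(1) pj' by simp
          moreover have "x i (n - 1 - j) = 0" using h a Suc.IH by auto
          ultimately show ?thesis using eq by simp
        qed
      qed
    qed
  qed
  then have "\<forall>j<n. \<forall>i. x i j = 0" using pos_lt by (meson less_imp_le)
  then show ?thesis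
  proof -
    assume H: "\<forall>j<n. \<forall>i. x i j = 0"
    have "x a b = 0" for a b using H xg by (cases "b < n") (auto simp: glD)
    then show ?thesis by (simp add: fun_eq_iff)
  qed
qed



lemma sum_apply2: "(\<Sum>m\<in>A. g m) i j = (\<Sum>m\<in>A. (g m i j :: complex))" for g :: "'a \<Rightarrow> cmat"
  by (induction A rule: infinite_finite_induct) auto

lemma Sc_span: "x \<in> Sc n \<Longrightarrow> x \<in> V.span (Pw n ` {..<n})"
proof -
  have "\<forall>x\<in>Sc n. (\<forall>i<n. t \<le> pos n i \<longrightarrow> x i 0 = 0) \<longrightarrow> x \<in> V.span (Pw n ` {..<t})" for t
  proof (induction t)
    case 0
    show ?case
    proof (intro ballI impI)
      fix x assume x: "x \<in> Sc n" and h: "\<forall>i<n. 0 \<le> pos n i \<longrightarrow> x i 0 = 0"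
      have "x i 0 = 0" for i using h x by (cases "i < n") (auto simp: Sc_def glD)
      then have "x = 0" using inj_Sc[OF x] by blast
      then show "x \<in> V.span (Pw n ` {..<0})" by (simp add: V.span_zero)
    qed
  next
    case (Suc t)
    have mono: "V.span (Pw n ` {..<t}) \<subseteq> V.span (Pw n ` {..<Suc t})"
      by (rule V.span_mono) auto
    show ?case
    proof (intro ballI impI)
      fix x assume x: "x \<in> Sc n" and h: "\<forall>i<n. Suc t \<le> pos n i \<longrightarrow> x i 0 = 0"
      show "x \<in> V.span (Pw n ` {..<Suc t})"
      proof (cases "t < n")
        case False
        have "\<forall>i<n. t \<le> pos n i \<longrightarrow> x i 0 = 0" using False pos_lt by (meson le_trans not_less)
        then show ?thesis using Suc.IH x mono by blast
      next
        case True
        obtain i0 where i0: "i0 < n" "pos n i0 = t" using pos_surj[OF True] by auto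
        have nz: "Pw n t i0 0 \<noteq> 0" using tri[OF i0(1), of t] i0 by simp
        define c where "c = x i0 0 / Pw n t i0 0"
        define x' where "x' = x - mscale c (Pw n t)"
        have x'S: "x' \<in> Sc n" unfolding x'_def
          by (rule V.subspace_diff[OF Sc_subspace x V.subspace_scale[OF Sc_subspace Pw_Sc]])
        have "\<forall>i<n. t \<le> pos n i \<longrightarrow> x' i 0 = 0"
        proof (intro allI impI)
          fix i assume i: "i < n" "t \<le> pos n i"
          show "x' i 0 = 0"
          proof (cases "pos n i = t")
            case True
            then have "i = i0" using pos_inj[OF i(1) i0(1)] i0 by simp
            then show ?thesis using nz by (simp add: x'_def c_def mscale_def)
          next
            case False
            then have "Pw n t i 0 = 0" "x i 0 = 0" using tri[OF i(1), of t] i h by auto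
            then show ?thesis by (simp add: x'_def mscale_def)
          qed
        qed
        then have "x' \<in> V.span (Pw n ` {..<Suc t})" using Suc.IH x'S mono by blast
        moreover have "mscale c (Pw n t) \<in> V.span (Pw n ` {..<Suc t})"
          by (intro V.span_scale V.span_base) auto
        ultimately have "x' + mscale c (Pw n t) \<in> V.span (Pw n ` {..<Suc t})"
          by (rule V.span_add)
        then show ?thesis by (simp add: x'_def)
      qed
    qed
  qed
  moreover have "\<forall>i<n. n \<le> pos n i \<longrightarrow> x i 0 = 0" using pos_lt by (meson not_less)
  ultimately show "x \<in> Sc n \<Longrightarrow> x \<in> V.span (Pw n ` {..<n})" by blast
qed

lemma Pw_inj: "inj_on (Pw n) {..<n}"
proof -
  have "a = b" if hab: "a < n" "b < n" "Pw n a = Pw n b" "a < b" for a b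
  proof -
    obtain i where i: "i < n" "pos n i = b" using pos_surj[OF hab(2)] by auto
    have "Pw n b i 0 \<noteq> 0" using tri[OF i(1), of b] i by simp
    moreover have "Pw n a i 0 = 0" using tri[OF i(1), of a] i hab by simp
    ultimately show ?thesis using hab by simp
  qed
  then show ?thesis unfolding inj_on_def by (metis lessThan_iff linorder_neqE_nat)
qed

lemma Pw_indep: "V.independent (Pw n ` {..<n})"
proof (rule V.independent_if_scalars_zero)
  show "finite (Pw n ` {..<n})" by simp
next
  fix f y assume h: "(\<Sum>x\<in>Pw n ` {..<n}. mscale (f x) x) = 0" and y: "y \<in> Pw n ` {..<n}"
  define c where "c m = f (Pw n m)" for m
  have "(\<Sum>m<n. mscale (c m) (Pw n m)) = 0"
    using h by (simp add: sum.reindex[OF Pw_inj] c_def)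
  then have col: "(\<Sum>m<n. c m * Pw n m i 0) = 0" for i
    by (metis (no_types, lifting) sum_apply2 mscale_def sum.cong zero_fun_apply)
  have "\<forall>m<n. c m = 0"
  proof (rule ccontr)
    assume "\<not> (\<forall>m<n. c m = 0)"
    then have ne: "{m. m < n \<and> c m \<noteq> 0} \<noteq> {}" by auto
    define M where "M = Max {m. m < n \<and> c m \<noteq> 0}"
    have fin: "finite {m. m < n \<and> c m \<noteq> 0}" by simp
    have M: "M < n" "c M \<noteq> 0" using Max_in[OF fin ne] unfolding M_def by auto
    have Mmax: "c m = 0" if "m < n" "M < m" for m
    proof (rule ccontr)
      assume "c m \<noteq> 0"
      then have "m \<in> {m. m < n \<and> c m \<noteq> 0}" using that by simp
      from Max_ge[OF fin this] have "m \<le> M" unfolding M_def .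
      with that show False by simp
    qed
    obtain i where i: "i < n" "pos n i = M" using pos_surj[OF M(1)] by auto
    have "(\<Sum>m<n. c m * Pw n m i 0) = (\<Sum>m<n. if m = M then c M * Pw n M i 0 else 0)"
    proof (rule sum.cong[OF refl])
      fix m assume m: "m \<in> {..<n}"
      show "c m * Pw n m i 0 = (if m = M then c M * Pw n M i 0 else 0)"
      proof (cases "m < M")
        case True then show ?thesis using tri[OF i(1), of m] i by simp
      next
        case False then show ?thesis using Mmax[of m] m by auto
      qed
    qed
    also have "\<dots> = c M * Pw n M i 0" using M by simp
    finally have "c M * Pw n M i 0 = 0" using col by simp
    moreover have "Pw n M i 0 \<noteq> 0" using tri[OF i(1), of M] i by simp
    ultimately show False using M by simp
  qed
  then show "f y = 0" using y by (auto simp: c_def)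
qed

theorem theorem3p16:
  fixes n :: nat
  assumes "n \<ge> 1"
  shows "cdim (kirillov_ker n (F n)) = n"
proof -
  have "V.dim (Sc n) = n"
  proof (rule V.dim_unique[of "Pw n ` {..<n}"])
    show "Pw n ` {..<n} \<subseteq> Sc n" using Pw_Sc by auto
    show "Sc n \<subseteq> V.span (Pw n ` {..<n})" using Sc_span by auto
    show "V.independent (Pw n ` {..<n})" by (rule Pw_indep)
    show "card (Pw n ` {..<n}) = n" by (simp add: card_image[OF Pw_inj])
  qed
  then show ?thesis by (simp add: cdim_def ker_char Sc_def)
qed

end
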